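(* Let $n\geq 2$, $a>1$, and let $u'':[1,a]\to[0,\infty)$ satisfy $u''(x)\geq k(x-1)(a-x)$ on $[1,a]$ for a constant $k>0$. Let $1<b_\infty<b_0<a$ be constants and suppose $b:[0,T)\to\mathbb{R}$ solves the initial value problem $b(0)=b_0$, $$\dot b=-\frac{k\,b_\infty(b_\infty-1)(a^2-b_0^2)(b-b_\infty)b^3}{a(a^2-b_\infty^2)(2a^2-b_\infty^2)^2}.$$ Then $$g_t(y):=\sqrt{\frac{a^2-b^2}{a^2-b_\infty^2}y^2+b^2},\qquad b=b(t),$$ is a sub-solution of the equation $$\dot h=u''(h(y))\left(\frac{h''}{1+h'^2}+(n-1)\frac{yh'-h}{y^2+h^2}\right)$$ for $y\in\left[-\sqrt{a^2-b_\infty^2},\sqrt{a^2-b_\infty^2}\right]$, in the sense that $\dot g_t-u''(g_t)\left(\frac{g_t''}{1+g_t'^2}+(n-1)\frac{yg_t'-g_t}{y^2+g_t^2}\right)\geq 0$ there.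
   Context: Dots denote $t$-derivatives and primes denote $y$-derivatives. The function $u''$ comes from a Calabi-symmetric K\"ahler form on the blowup of $\mathbb{P}^n$ at a point, expressed in the Legendre coordinate $x\in[1,a]$. *)

theory Defs
  imports "HOL-Analysis.Analysis"
begin

definition gsub :: "real \<Rightarrow> real \<Rightarrow> real \<Rightarrow> real \<Rightarrow> real" where
  "gsub a binf bt y = sqrt ((a\<^sup>2 - bt\<^sup>2) / (a\<^sup>2 - binf\<^sup>2) * y\<^sup>2 + bt\<^sup>2)"

definition bode_rhs :: "real \<Rightarrow> real \<Rightarrow> real \<Rightarrow> real \<Rightarrow> real \<Rightarrow> real" where
  "bode_rhs k a b0 binf bt =
     - (k * binf * (binf - 1) * (a\<^sup>2 - b0\<^sup>2) * (bt - binf) * bt ^ 3)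
       / (a * (a\<^sup>2 - binf\<^sup>2) * (2 * a\<^sup>2 - binf\<^sup>2)\<^sup>2)"

end

theory Submission
  imports Defs
begin

lemma ntriv: "t \<in> {0..<T} \<Longrightarrow> at t within {t..(t+T)/2} \<noteq> (bot::real filter)"
  by (subst at_within_Icc_at_right) auto

lemma dunique: assumes "(f has_real_derivative D) (at t within {0..<T})"
  "(f has_real_derivative E) (at t within {0..<T})" "t \<in> {0..<T}"
shows "D = E"
proof -
  have s: "{t..(t+T)/2} \<subseteq> {0..<T}" using assms(3) by auto
  show ?thesis
    by (rule has_field_derivative_unique[OF has_field_derivative_subset[OF assms(1) s]
        has_field_derivative_subset[OF assms(2) s] ntriv[OF assms(3)]])
qed

lemma inv_lower:
  fixes b :: "real \<Rightarrow> real" and C binf b0 T :: real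
  assumes "binf < b0" "b 0 = b0"
    and ode: "\<forall>t\<in>{0..<T}. (b has_real_derivative (- C * (b t - binf) * b t ^ 3)) (at t within {0..<T})"
    and t1: "t1 \<in> {0..<T}"
  shows "binf < b t1"
proof -
  have sub: "{0..t1} \<subseteq> {0..<T}" using t1 by auto
  have db: "\<And>s. s \<in> {0..t1} \<Longrightarrow> (b has_real_derivative (- C * (b s - binf) * b s ^ 3)) (at s within {0..t1})"
    using ode sub by (meson has_field_derivative_subset subsetD)
  have cont: "continuous_on {0..t1} b"
    using db by (meson DERIV_continuous continuous_on_eq_continuous_within)
  hence cont3: "continuous_on {0..t1} (\<lambda>r. b r ^ 3)" by (intro continuous_intros)
  define I where "I s = integral {0..s} (\<lambda>r. b r ^ 3)" for s
  have dI: "\<And>s. s \<in> {0..t1} \<Longrightarrow> (I has_real_derivative b s ^ 3) (at s within {0..t1})"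
    unfolding I_def by (rule integral_has_real_derivative[OF cont3])
  define q where "q s = (b s - binf) * exp (C * I s)" for s
  have dq: "\<And>s. s \<in> {0..t1} \<Longrightarrow> (q has_real_derivative 0) (at s within {0..t1})"
  proof -
    fix s assume s: "s \<in> {0..t1}"
    show "(q has_real_derivative 0) (at s within {0..t1})"
      unfolding q_def
      by (rule derivative_eq_intros db[OF s] dI[OF s] refl | simp add: algebra_simps)+
  qed
  obtain c where c: "\<forall>x\<in>{0..t1}. q x = c"
    using has_field_derivative_zero_constant[of "{0..t1}" q] dq by auto
  have "q t1 = q 0" using c t1 by auto
  also have "q 0 = b0 - binf" unfolding q_def I_def using assms by simp
  finally have "(b t1 - binf) * exp (C * I t1) > 0" unfolding q_def using assms by simp
  thus ?thesis by (simp add: zero_less_mult_iff)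
qed

lemma inv_upper:
  fixes b :: "real \<Rightarrow> real" and C binf b0 T :: real
  assumes "0 < binf" "binf < b0" "b 0 = b0" "C \<ge> 0"
    and ode: "\<forall>t\<in>{0..<T}. (b has_real_derivative (- C * (b t - binf) * b t ^ 3)) (at t within {0..<T})"
    and t1: "t1 \<in> {0..<T}"
  shows "b t1 \<le> b0"
proof -
  have lo: "\<And>s. s \<in> {0..<T} \<Longrightarrow> binf < b s" using inv_lower[OF assms(2,3) ode] by blast
  have sub: "{0..t1} \<subseteq> {0..<T}" using t1 by auto
  have cont: "continuous_on {0..t1} b"
    using ode sub by (meson DERIV_continuous continuous_on_eq_continuous_within has_field_derivative_subset subsetD)
  have "b t1 \<le> b 0"
  proof (rule DERIV_nonpos_imp_decreasing_open[OF _ _ cont])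
    show "0 \<le> t1" using t1 by auto
    fix x assume x: "0 < x" "x < t1"
    hence xin: "x \<in> {0<..<T}" using t1 by auto
    have "at x within {0..<T} = at x"
      by (rule at_within_open_subset[OF xin]) auto
    hence d: "(b has_real_derivative (- C * (b x - binf) * b x ^ 3)) (at x)"
      using ode xin by (metis greaterThanLessThan_iff atLeastLessThan_iff less_imp_le)
    have bx: "binf < b x" using lo xin by auto
    have "0 \<le> C * (b x - binf) * b x ^ 3" using bx assms by simp
    thus "\<exists>y. (b has_real_derivative y) (at x) \<and> y \<le> 0" using d by (intro exI[of _ "- C * (b x - binf) * b x ^ 3"]) simp
  qed
  thus ?thesis using assms by simp
qed
theorem lemma3p2:
  fixes n :: nat and a k b0 binf T :: real and U b :: "real \<Rightarrow> real"
  assumes "n \<ge> 2" and "a > 1" and "k > 0"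
    and U_nonneg: "\<forall>x\<in>{1..a}. U x \<ge> 0"
    and U_lower: "\<forall>x\<in>{1..a}. U x \<ge> k * (x - 1) * (a - x)"
    and "1 < binf" and "binf < b0" and "b0 < a"
    and b_init: "b 0 = b0"
    and b_ode: "\<forall>t\<in>{0..<T}. (b has_real_derivative bode_rhs k a b0 binf (b t)) (at t within {0..<T})"
  shows "\<forall>t\<in>{0..<T}. \<forall>y\<in>{- sqrt (a\<^sup>2 - binf\<^sup>2) .. sqrt (a\<^sup>2 - binf\<^sup>2)}.
           (\<exists>D0. ((\<lambda>s. gsub a binf (b s) y) has_real_derivative D0) (at t within {0..<T}))
         \<and> (\<forall>D0 D1 D2.
              ((\<lambda>s. gsub a binf (b s) y) has_real_derivative D0) (at t within {0..<T})
            \<longrightarrow> ((\<lambda>z. gsub a binf (b t) z) has_real_derivative D1) (at y)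
            \<longrightarrow> ((\<lambda>z. deriv (\<lambda>w. gsub a binf (b t) w) z) has_real_derivative D2) (at y)
            \<longrightarrow> D0 - U (gsub a binf (b t) y) *
                   (D2 / (1 + D1\<^sup>2)
                    + real (n - 1) * (y * D1 - gsub a binf (b t) y) / (y\<^sup>2 + (gsub a binf (b t) y)\<^sup>2)) \<ge> 0)"
proof (intro ballI)
  fix t y assume t: "t \<in> {0..<T}" and y: "y \<in> {- sqrt (a\<^sup>2 - binf\<^sup>2) .. sqrt (a\<^sup>2 - binf\<^sup>2)}"
  have n2: "n \<ge> 2" by (rule assms(1))
  have a1: "a > 1" by (rule assms(2))
  have k0: "k > 0" by (rule assms(3))
  have bi1: "1 < binf" by (rule assms(6))
  have bib0: "binf < b0" by (rule assms(7))
  have b0a: "b0 < a" by (rule assms(8))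
  note AS = a1 k0 bi1 bib0 b0a
  define A where "A = a\<^sup>2 - binf\<^sup>2"
  define W where "W = 2*a\<^sup>2 - binf\<^sup>2"
  define C where "C = k*binf*(binf-1)*(a\<^sup>2-b0\<^sup>2)/(a*A*W\<^sup>2)"
  have binf_a: "binf < a" using AS by linarith
  have sq_lt: "binf\<^sup>2 < a\<^sup>2" by (rule power_strict_mono) (use AS binf_a in auto)
  have b0sq: "b0\<^sup>2 < a\<^sup>2" by (rule power_strict_mono) (use AS in auto)
  have A0: "A > 0" unfolding A_def using sq_lt by simp
  have W0: "W > 0" unfolding W_def using sq_lt zero_le_power2[of a] by linarith
  have AW: "A + a\<^sup>2 = W" unfolding A_def W_def by simp
  have rhs: "\<And>x. bode_rhs k a b0 binf x = - C*(x-binf)*x^3"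
    using A0 W0 AS unfolding bode_rhs_def C_def A_def[symmetric] W_def[symmetric] by (simp add: field_simps)
  have ode': "\<forall>t\<in>{0..<T}. (b has_real_derivative (- C*(b t-binf)*b t^3)) (at t within {0..<T})"
    using b_ode rhs by simp
  have C0: "C \<ge> 0" unfolding C_def using AS A0 W0 b0sq by (intro divide_nonneg_pos mult_nonneg_nonneg) auto
  define \<beta> where "\<beta> = b t"
  have bl: "binf < \<beta>" unfolding \<beta>_def by (rule inv_lower[OF _ b_init ode' t]) (use AS in auto)
  have bu: "\<beta> \<le> b0" unfolding \<beta>_def by (rule inv_upper[OF _ _ b_init C0 ode' t]) (use AS in auto)
  have b_pos: "\<beta> > 0" using bl AS by linarith
  have bsq: "\<beta>\<^sup>2 \<le> b0\<^sup>2" by (rule power_mono) (use bu b_pos in auto)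
  have bsq2: "binf\<^sup>2 < \<beta>\<^sup>2" by (rule power_strict_mono) (use bl AS in auto)
  define \<beta>' where "\<beta>' = - C*(\<beta>-binf)*\<beta>^3"
  have db: "(b has_real_derivative \<beta>') (at t within {0..<T})"
    using ode' t unfolding \<beta>'_def \<beta>_def by auto
  define c where "c = (a\<^sup>2-\<beta>\<^sup>2)/A"
  have c0: "0 < c" unfolding c_def using A0 bsq b0sq by simp
  have c1: "c < 1" unfolding c_def using A0 bsq2 by (simp add: A_def)
  have cA: "c * A = a\<^sup>2 - \<beta>\<^sup>2" unfolding c_def using A0 by simp
  have yabs: "\<bar>y\<bar> \<le> sqrt A" using y unfolding A_def by auto
  have y2: "y\<^sup>2 \<le> A"
  proof -
    have "\<bar>y\<bar>\<^sup>2 \<le> (sqrt A)\<^sup>2" by (rule power_mono) (use yabs in auto)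
    thus ?thesis using A0 by simp
  qed
  define G where "G = gsub a binf \<beta> y"
  have inpos: "0 < c*y\<^sup>2 + \<beta>\<^sup>2" using c0 b_pos by (simp add: add_nonneg_pos)
  have Gdef: "G = sqrt (c*y\<^sup>2 + \<beta>\<^sup>2)" unfolding G_def gsub_def c_def A_def by simp
  have G0: "G > 0" using Gdef inpos by simp
  have G2: "G\<^sup>2 = c*y\<^sup>2 + \<beta>\<^sup>2" using Gdef inpos by simp
  have Gle: "G \<le> a"
  proof -
    have "c*y\<^sup>2 \<le> c*A" by (rule mult_left_mono) (use y2 c0 in auto)
    hence "G\<^sup>2 \<le> a\<^sup>2" using G2 cA by linarith
    thus ?thesis by (rule power2_le_imp_le) (use AS in auto)
  qed
  have Gge: "\<beta> \<le> G"
  proof -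
    have "0 \<le> c*y\<^sup>2" using c0 by simp
    hence "\<beta>\<^sup>2 \<le> G\<^sup>2" using G2 by linarith
    thus ?thesis by (rule power2_le_imp_le) (use G0 in auto)
  qed
  define D0v where "D0v = ((-(2*\<beta>))/A*y\<^sup>2 + 2*\<beta>)/(2*G) * \<beta>'"
  have dh: "((\<lambda>x. sqrt ((a\<^sup>2-x\<^sup>2)/A*y\<^sup>2 + x\<^sup>2)) has_real_derivative ((-(2*\<beta>))/A*y\<^sup>2 + 2*\<beta>)/(2*G)) (at \<beta>)"
  proof -
    have e: "sqrt ((a\<^sup>2-\<beta>\<^sup>2)/A*y\<^sup>2 + \<beta>\<^sup>2) = G" by (simp only: Gdef c_def)
    have p: "0 < (a\<^sup>2-\<beta>\<^sup>2)/A*y\<^sup>2 + \<beta>\<^sup>2" using inpos unfolding c_def .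
    show ?thesis using e p G0 A0
      by (auto intro!: derivative_eq_intros simp: field_simps)
  qed
  have dG: "((\<lambda>s. gsub a binf (b s) y) has_real_derivative D0v) (at t within {0..<T})"
  proof -
    have "((\<lambda>s. sqrt ((a\<^sup>2-(b s)\<^sup>2)/A*y\<^sup>2 + (b s)\<^sup>2)) has_real_derivative D0v) (at t within {0..<T})"
      unfolding D0v_def using DERIV_chain2[OF dh[unfolded \<beta>_def] db[unfolded \<beta>_def]] by (simp add: \<beta>_def)
    thus ?thesis unfolding gsub_def A_def .
  qed
  have gs: "\<And>z. gsub a binf \<beta> z = sqrt (c*z\<^sup>2 + \<beta>\<^sup>2)" unfolding gsub_def c_def A_def by simp
  have df: "\<And>z. ((\<lambda>w. gsub a binf \<beta> w) has_real_derivative c*z/gsub a binf \<beta> z) (at z)"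
  proof -
    fix z
    have p: "0 < c*z\<^sup>2 + \<beta>\<^sup>2" using c0 b_pos by (simp add: add_nonneg_pos)
    show "((\<lambda>w. gsub a binf \<beta> w) has_real_derivative c*z/gsub a binf \<beta> z) (at z)"
      unfolding gs using p
      by (auto intro!: derivative_eq_intros simp: field_simps)
  qed
  have deriv_eq: "deriv (\<lambda>w. gsub a binf \<beta> w) = (\<lambda>z. c*z/gsub a binf \<beta> z)"
    by (rule ext, rule DERIV_imp_deriv, rule df)
  have gpos: "\<And>z. gsub a binf \<beta> z > 0" unfolding gs using c0 b_pos by (simp add: add_nonneg_pos)
  define D2v where "D2v = (c*G - c*y*(c*y/G))/(G*G)"
  have df2: "((\<lambda>z. c*z/gsub a binf \<beta> z) has_real_derivative D2v) (at y)"
  proof -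
    have "((\<lambda>z. c*z) has_real_derivative c) (at y)" by (auto intro!: derivative_eq_intros)
    from DERIV_divide[OF this df[of y]] gpos[of y]
    show ?thesis unfolding D2v_def G_def by simp
  qed
  define P where "P = c*(1+c)*y\<^sup>2 + \<beta>\<^sup>2"
  define Q where "Q = (1+c)*y\<^sup>2 + \<beta>\<^sup>2"
  have P0: "P > 0" unfolding P_def using c0 b_pos by (simp add: add_nonneg_pos)
  have Q0: "Q > 0" unfolding Q_def using c0 b_pos by (simp add: add_nonneg_pos)
  have PQ: "P \<le> Q" unfolding P_def Q_def using c0 c1
    by (intro add_right_mono mult_right_mono) auto
  have QW: "Q \<le> W"
  proof -
    have "Q = y\<^sup>2 + G\<^sup>2" unfolding Q_def using G2 by (simp add: algebra_simps)
    thus ?thesis using y2 Gle G0 AW by (smt (verit) power_mono)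
  qed
  define B1 where "B1 = - ((1-c)*\<beta>^4/(G*P*Q))"
  define K where "K = k*(G-1)*(a-G)"
  have B1le: "B1 \<le> 0" unfolding B1_def
  proof -
    have "0 \<le> (1-c)*\<beta>^4/(G*P*Q)" using c1 G0 P0 Q0 by simp
    thus "- ((1-c)*\<beta>^4/(G*P*Q)) \<le> 0" by linarith
  qed
  have Gin: "G \<in> {1..a}" using Gge Gle bl AS by auto
  have K0: "0 \<le> K" unfolding K_def using Gin AS by auto
  have KU: "K \<le> U G" unfolding K_def using U_lower Gin by auto
  have s1: "1 - y\<^sup>2/A \<ge> 0" using y2 A0 by simp
  have key0: "C*(1 - y\<^sup>2/A) \<le> k*(G-1)*(a-G)*(\<beta>+binf)/(A*P*Q)"
  proof -
    have eq1: "C*(1 - y\<^sup>2/A) = (k/A) * ((binf*(binf-1)) * (((a\<^sup>2-b0\<^sup>2)*(1 - y\<^sup>2/A)/a) * (1/W\<^sup>2)))"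
      unfolding C_def using A0 W0 AS by (simp add: field_simps)
    have e1: "binf*(binf-1) \<le> ((\<beta>+binf)/2)*(G-1)"
      by (rule mult_mono) (use bl Gge AS in auto)
    have e2: "(a\<^sup>2-b0\<^sup>2)*(1 - y\<^sup>2/A)/a \<le> 2*(a-G)"
    proof -
      have "(a\<^sup>2-b0\<^sup>2)*(1 - y\<^sup>2/A) \<le> (a\<^sup>2-\<beta>\<^sup>2)*(1 - y\<^sup>2/A)"
        by (rule mult_right_mono) (use bsq s1 in auto)
      also have "(a\<^sup>2-\<beta>\<^sup>2)*(1 - y\<^sup>2/A) = a\<^sup>2 - G\<^sup>2"
        using G2 cA A0 unfolding c_def by (simp add: field_simps)
      also have "a\<^sup>2 - G\<^sup>2 = (a-G)*(a+G)" by (simp add: power2_eq_square algebra_simps)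
      also have "\<dots> \<le> (a-G)*(2*a)" by (rule mult_left_mono) (use Gle in auto)
      finally show ?thesis using AS by (simp add: field_simps)
    qed
    have e3: "1/W\<^sup>2 \<le> 1/(P*Q)"
    proof -
      have "P*Q \<le> W*W" by (rule mult_mono) (use PQ QW P0 Q0 in auto)
      thus ?thesis using P0 Q0 by (simp add: power2_eq_square frac_le)
    qed
    have n1: "0 \<le> binf*(binf-1)" using AS by simp
    have n2: "0 \<le> (a\<^sup>2-b0\<^sup>2)*(1 - y\<^sup>2/A)/a" using b0sq s1 AS by simp
    have n3: "0 \<le> 1/W\<^sup>2" by simp
    have nY1: "0 \<le> ((\<beta>+binf)/2)*(G-1)" using b_pos bl Gin AS by (intro mult_nonneg_nonneg) auto
    have nX23: "0 \<le> ((a\<^sup>2-b0\<^sup>2)*(1 - y\<^sup>2/A)/a) * (1/W\<^sup>2)" using n2 n3 by (rule mult_nonneg_nonneg)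
    have m23: "((a\<^sup>2-b0\<^sup>2)*(1 - y\<^sup>2/A)/a) * (1/W\<^sup>2) \<le> (2*(a-G)) * (1/(P*Q))"
      by (rule mult_mono[OF e2 e3]) (use Gin in auto)
    have "(binf*(binf-1)) * (((a\<^sup>2-b0\<^sup>2)*(1 - y\<^sup>2/A)/a) * (1/W\<^sup>2))
          \<le> (((\<beta>+binf)/2)*(G-1)) * ((2*(a-G)) * (1/(P*Q)))"
      by (rule mult_mono[OF e1 m23 nY1 nX23])
    hence "C*(1 - y\<^sup>2/A) \<le> (k/A) * ((((\<beta>+binf)/2)*(G-1)) * ((2*(a-G)) * (1/(P*Q))))"
      unfolding eq1 by (rule mult_left_mono) (use AS A0 in auto)
    also have "\<dots> = k*(G-1)*(a-G)*(\<beta>+binf)/(A*P*Q)" using A0 P0 Q0 by (simp add: field_simps)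
    finally show ?thesis .
  qed
  have D0eq: "D0v = - C*(\<beta>-binf)*\<beta>^4*(1 - y\<^sup>2/A)/G"
    unfolding D0v_def \<beta>'_def using A0 G0 by (simp add: field_simps eval_nat_numeral)
  have KB1: "- K*B1 = k*(G-1)*(a-G)*(\<beta>+binf)/(A*P*Q) * ((\<beta>-binf)*\<beta>^4/G)"
    unfolding K_def B1_def c_def using A0 G0 P0 Q0
    by (simp add: field_simps power2_eq_square A_def)
  have main0: "0 \<le> D0v - K*B1"
  proof -
    have m: "0 \<le> (\<beta>-binf)*\<beta>^4/G" using bl G0 by simp
    have "C*(1 - y\<^sup>2/A) * ((\<beta>-binf)*\<beta>^4/G) \<le> k*(G-1)*(a-G)*(\<beta>+binf)/(A*P*Q) * ((\<beta>-binf)*\<beta>^4/G)"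
      using key0 m by (rule mult_right_mono)
    moreover have "D0v = - (C*(1 - y\<^sup>2/A) * ((\<beta>-binf)*\<beta>^4/G))" unfolding D0eq using A0 G0 by (simp add: field_simps)
    ultimately show ?thesis using KB1 by linarith
  qed
  show "(\<exists>D0. ((\<lambda>s. gsub a binf (b s) y) has_real_derivative D0) (at t within {0..<T}))
         \<and> (\<forall>D0 D1 D2.
              ((\<lambda>s. gsub a binf (b s) y) has_real_derivative D0) (at t within {0..<T})
            \<longrightarrow> ((\<lambda>z. gsub a binf (b t) z) has_real_derivative D1) (at y)
            \<longrightarrow> ((\<lambda>z. deriv (\<lambda>w. gsub a binf (b t) w) z) has_real_derivative D2) (at y)
            \<longrightarrow> D0 - U (gsub a binf (b t) y) *
                   (D2 / (1 + D1\<^sup>2)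
                    + real (n - 1) * (y * D1 - gsub a binf (b t) y) / (y\<^sup>2 + (gsub a binf (b t) y)\<^sup>2)) \<ge> 0)"
    unfolding \<beta>_def[symmetric] G_def[symmetric]
  proof (intro conjI allI impI)
    show "\<exists>D0. ((\<lambda>s. gsub a binf (b s) y) has_real_derivative D0) (at t within {0..<T})"
      using dG by blast
    fix D0 D1 D2
    assume h0: "((\<lambda>s. gsub a binf (b s) y) has_real_derivative D0) (at t within {0..<T})"
      and h1: "((\<lambda>z. gsub a binf \<beta> z) has_real_derivative D1) (at y)"
      and h2: "((\<lambda>z. deriv (\<lambda>w. gsub a binf \<beta> w) z) has_real_derivative D2) (at y)"
    have eD0: "D0 = D0v" using dunique[OF h0 dG t] .
    have eD1: "D1 = c*y/G" using DERIV_unique[OF h1 df[of y]] unfolding G_def .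
    have eD2: "D2 = D2v" using DERIV_unique[OF h2[unfolded deriv_eq] df2] .
    have D2s: "D2 = c*\<beta>\<^sup>2/G^3"
    proof -
      have "c*G - c*y*(c*y/G) = c*(G\<^sup>2 - c*y\<^sup>2)/G" using G0 by (simp add: field_simps power2_eq_square)
      also have "G\<^sup>2 - c*y\<^sup>2 = \<beta>\<^sup>2" using G2 by simp
      finally have "c*G - c*y*(c*y/G) = c*\<beta>\<^sup>2/G" .
      thus ?thesis unfolding eD2 D2v_def using G0 by (simp add: power3_eq_cube)
    qed
    have D1s: "1 + D1\<^sup>2 = P/G\<^sup>2"
    proof -
      have "1 + D1\<^sup>2 = (G\<^sup>2 + c\<^sup>2*y\<^sup>2)/G\<^sup>2" unfolding eD1 using G0 by (simp add: field_simps power2_eq_square)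
      also have "G\<^sup>2 + c\<^sup>2*y\<^sup>2 = P" unfolding P_def using G2 by (simp add: algebra_simps power2_eq_square)
      finally show ?thesis .
    qed
    have T1: "D2/(1 + D1\<^sup>2) = c*\<beta>\<^sup>2/(G*P)" unfolding D2s D1s using G0 P0
      by (simp add: field_simps power2_eq_square power3_eq_cube)
    have T2: "y*D1 - G = - (\<beta>\<^sup>2/G)" unfolding eD1 using G0 G2
      by (simp add: field_simps power2_eq_square)
    have T3: "y\<^sup>2 + G\<^sup>2 = Q" unfolding Q_def using G2 by (simp add: algebra_simps)
    define B where "B = D2 / (1 + D1\<^sup>2) + real (n - 1) * (y * D1 - G) / (y\<^sup>2 + G\<^sup>2)"
    have n1: "real (n-1) \<ge> 1" using n2 by simp
    have r0: "0 \<le> \<beta>\<^sup>2/G/Q" using G0 Q0 by simp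
    have "B = c*\<beta>\<^sup>2/(G*P) - real (n-1) * (\<beta>\<^sup>2/G/Q)" unfolding B_def T1 T2 T3 by simp
    also have "\<dots> \<le> c*\<beta>\<^sup>2/(G*P) - 1 * (\<beta>\<^sup>2/G/Q)"
    proof -
      have "1 * (\<beta>\<^sup>2/G/Q) \<le> real (n-1) * (\<beta>\<^sup>2/G/Q)" by (rule mult_right_mono[OF n1 r0])
      thus ?thesis by linarith
    qed
    also have "\<dots> = \<beta>\<^sup>2*(c*Q - P)/(G*P*Q)" using G0 P0 Q0 by (simp add: field_simps)
    also have "c*Q - P = -(1-c)*\<beta>\<^sup>2" unfolding P_def Q_def by (simp add: algebra_simps)
    also have "\<beta>\<^sup>2*(-(1-c)*\<beta>\<^sup>2)/(G*P*Q) = B1" using G0 P0 Q0 unfolding B1_def by (simp add: field_simps eval_nat_numeral)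
    finally have BB1: "B \<le> B1" .
    have U0: "0 \<le> U G" using K0 KU by linarith
    have "U G * B \<le> U G * B1" using BB1 U0 by (rule mult_left_mono)
    also have "U G * B1 \<le> K * B1" using KU B1le by (rule mult_right_mono_neg)
    finally have "U G * B \<le> K*B1" .
    thus "0 \<le> D0 - U G * (D2 / (1 + D1\<^sup>2) + real (n - 1) * (y * D1 - G) / (y\<^sup>2 + G\<^sup>2))"
      using main0 eD0 unfolding B_def by linarith
  qed
qed
end
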